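(* For every integer $d\ge1$, the set of forms $f\in\Sigma^4_{2,4d}$ of $4$-length at most $4$ (i.e. $f=\sum_{i=1}^4 p_i^4$ with $p_i\in\mathbb{R}[x,y]_d$) is a full-dimensional semi-algebraic subset of $\mathbb{R}[x,y]_{4d}$, i.e. it has nonempty interior in $\mathbb{R}[x,y]_{4d}$.
   Context: $\mathbb{R}[x,y]_e$ denotes the space of real binary forms of degree $e$. $\Sigma^4_{2,4d}\subset\mathbb{R}[x,y]_{4d}$ is the cone of finite sums of fourth powers of forms in $\mathbb{R}[x,y]_d$; the $4$-length of $f\in\Sigma^4_{2,4d}$ is the minimal number of such summands. *)

theory Defs
  imports Complex_Main "HOL-Computational_Algebra.Polynomial"
begin

text \<open>A real binary form of degree e is encoded by the coefficient polynomial P with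
  degree P \<le> e; the form is  (x,y) \<mapsto> \<Sum>i\<le>e. coeff P i * x^i * y^(e-i).
  This identifies R[x,y]_e with R^(e+1) (coefficient coordinates).\<close>

definition is_bform :: "nat \<Rightarrow> real poly \<Rightarrow> bool" where
  "is_bform e P \<longleftrightarrow> degree P \<le> e"

definition bform_eval :: "nat \<Rightarrow> real poly \<Rightarrow> real \<Rightarrow> real \<Rightarrow> real" where
  "bform_eval e P x y = (\<Sum>i\<le>e. coeff P i * x ^ i * y ^ (e - i))"

definition four_length_le4 :: "nat \<Rightarrow> real poly set" where
  "four_length_le4 d = {F. is_bform (4 * d) F \<and>
     (\<exists>p :: nat \<Rightarrow> real poly. (\<forall>i<4. is_bform d (p i)) \<and>
        (\<forall>x y. bform_eval (4 * d) F x y = (\<Sum>i<4. (bform_eval d (p i) x y) ^ 4)))}"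

text \<open>Nonempty interior of a set of forms of degree e inside R[x,y]_e, in coefficient coordinates
  (max-norm balls; equivalent to the Euclidean topology).\<close>
definition has_nonempty_interior_forms :: "nat \<Rightarrow> real poly set \<Rightarrow> bool" where
  "has_nonempty_interior_forms e S \<longleftrightarrow>
     (\<exists>F0 \<epsilon>. is_bform e F0 \<and> \<epsilon> > 0 \<and>
        (\<forall>G. is_bform e G \<and> (\<forall>i\<le>e. \<bar>coeff G i - coeff F0 i\<bar> < \<epsilon>) \<longrightarrow> G \<in> S))"

end

theory Submission
  imports Defs
begin

definition nrm :: "real poly \<Rightarrow> real" where "nrm p = (\<Sum>i\<le>degree p. \<bar>coeff p i\<bar>)"

lemma nrm_eq: "degree p \<le> N \<Longrightarrow> nrm p = (\<Sum>i\<le>N. \<bar>coeff p i\<bar>)"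
  unfolding nrm_def by (rule sum.mono_neutral_left) (auto simp: coeff_eq_0)

lemma nrm_nonneg: "nrm p \<ge> 0"
  unfolding nrm_def by (simp add: sum_nonneg)

lemma coeff_le_nrm: "\<bar>coeff p i\<bar> \<le> nrm p"
proof (cases "i \<le> degree p")
  case True
  then show ?thesis unfolding nrm_def by (intro member_le_sum) auto
next
  case False
  then show ?thesis by (simp add: coeff_eq_0 nrm_nonneg)
qed

lemma nrm_0 [simp]: "nrm 0 = 0" by (simp add: nrm_def)

lemma nrm_add: "nrm (p + q) \<le> nrm p + nrm q"
proof -
  let ?N = "max (degree p) (degree q)"
  have "nrm (p+q) = (\<Sum>i\<le>?N. \<bar>coeff (p+q) i\<bar>)"
    by (rule nrm_eq) (simp add: degree_add_le)
  also have "\<dots> \<le> (\<Sum>i\<le>?N. \<bar>coeff p i\<bar> + \<bar>coeff q i\<bar>)"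
    by (intro sum_mono) (simp add: abs_triangle_ineq)
  also have "\<dots> = nrm p + nrm q"
    by (simp add: sum.distrib nrm_eq[of p ?N] nrm_eq[of q ?N])
  finally show ?thesis .
qed

lemma nrm_uminus [simp]: "nrm (- p) = nrm p"
  by (simp add: nrm_def)

lemma nrm_diff: "nrm (p - q) \<le> nrm p + nrm q"
  using nrm_add[of p "-q"] by simp

lemma nrm_smult [simp]: "nrm (smult c p) = \<bar>c\<bar> * nrm p"
proof -
  have "nrm (smult c p) = (\<Sum>i\<le>degree p. \<bar>coeff (smult c p) i\<bar>)"
    by (rule nrm_eq) (simp add: degree_smult_le)
  also have "\<dots> = \<bar>c\<bar> * nrm p"
    by (simp add: nrm_def abs_mult sum_distrib_left)
  finally show ?thesis .
qed

lemma nrm_numeral_mult [simp]: "nrm (numeral n * p) = numeral n * nrm p"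
  by (simp add: numeral_mult_conv_smult)

lemma nrm_pCons: "nrm (pCons a p) = \<bar>a\<bar> + nrm p"
proof -
  have "nrm (pCons a p) = (\<Sum>i\<le>Suc (degree p). \<bar>coeff (pCons a p) i\<bar>)"
    by (rule nrm_eq) (simp add: degree_pCons_le)
  also have "\<dots> = \<bar>a\<bar> + (\<Sum>i\<le>degree p. \<bar>coeff p i\<bar>)"
    unfolding sum.atMost_Suc_shift by simp
  finally show ?thesis by (simp add: nrm_def)
qed

lemma nrm_mult: "nrm (p * q) \<le> nrm p * nrm q"
proof (induction p rule: pCons_induct)
  case 0
  then show ?case by simp
next
  case (pCons a p)
  have "nrm (pCons a p * q) = nrm (smult a q + pCons 0 (p * q))" by simp
  also have "\<dots> \<le> \<bar>a\<bar> * nrm q + nrm (p*q)"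
    using nrm_add[of "smult a q" "pCons 0 (p*q)"] by (simp add: nrm_pCons)
  also have "\<dots> \<le> \<bar>a\<bar> * nrm q + nrm p * nrm q" using pCons.IH by simp
  also have "\<dots> = nrm (pCons a p) * nrm q" by (simp add: nrm_pCons algebra_simps)
  finally show ?case .
qed

lemma nrm_mult_le: "nrm p \<le> a \<Longrightarrow> nrm q \<le> b \<Longrightarrow> nrm (p * q) \<le> a * b"
  by (meson dual_order.trans mult_mono nrm_mult nrm_nonneg)

lemma nrm_zero: "nrm p \<le> 0 \<Longrightarrow> p = 0"
  using coeff_le_nrm[of p] by (metis abs_le_zero_iff dual_order.trans poly_eqI coeff_0)

lemma nrm_bound: "degree p \<le> N \<Longrightarrow> (\<And>i. i \<le> N \<Longrightarrow> \<bar>coeff p i\<bar> \<le> B) \<Longrightarrow> nrm p \<le> real (Suc N) * B"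
proof -
  assume "degree p \<le> N" "\<And>i. i \<le> N \<Longrightarrow> \<bar>coeff p i\<bar> \<le> B"
  then have "nrm p = (\<Sum>i\<le>N. \<bar>coeff p i\<bar>)" by (simp add: nrm_eq)
  also have "\<dots> \<le> (\<Sum>i\<le>N. B)" by (rule sum_mono) (use \<open>\<And>i. i \<le> N \<Longrightarrow> \<bar>coeff p i\<bar> \<le> B\<close> in auto)
  finally show ?thesis by simp
qed

lemma nrm_one [simp]: "nrm 1 = 1" by (simp add: nrm_def)
lemma nrm_monom [simp]: "nrm (monom c n) = \<bar>c\<bar>"
  by (cases "c = 0") (simp_all add: nrm_def degree_monom_eq if_distrib[of abs] cong: if_cong)


definition qq :: "real poly \<Rightarrow> real poly \<Rightarrow> real poly" where
 "qq b h = 6*(b^2*h^2) + 4*(b*h^3) + h^4"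

lemma expand: "(b+h)^4 = b^4 + 4*(b^3*h) + qq b h"
  unfolding qq_def by (simp add: algebra_simps power2_eq_square power3_eq_cube power4_eq_xxxx)

lemma qq_diff: "qq b h - qq b h' = (h - h') * (6*(b^2*(h+h')) + 4*(b*(h^2+h*h'+h'^2)) + (h+h')*(h^2+h'^2))"
  unfolding qq_def by (simp add: algebra_simps power2_eq_square power3_eq_cube power4_eq_xxxx)

lemma qq_0 [simp]: "qq b 0 = 0" by (simp add: qq_def)

lemma qq_lip:
  assumes b: "nrm b \<le> 2" and h: "nrm h \<le> \<rho>" and h': "nrm h' \<le> \<rho>" and r0: "0 \<le> \<rho>" and r1: "\<rho> \<le> 1"
  shows "nrm (qq b h - qq b h') \<le> 76*\<rho>*nrm (h-h')"
proof -
  have hh: "nrm (h+h') \<le> 2*\<rho>" using nrm_add[of h h'] h h' by linarith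
  have b2: "nrm (b^2) \<le> 2*2" unfolding power2_eq_square by (rule nrm_mult_le[OF b b])
  have A0: "nrm (b^2*(h+h')) \<le> (2*2)*(2*\<rho>)" by (rule nrm_mult_le[OF b2 hh])
  have A: "nrm (6*(b^2*(h+h'))) \<le> 48*\<rho>" using A0 by simp
  have s1: "nrm (h^2) \<le> \<rho>*\<rho>" unfolding power2_eq_square by (rule nrm_mult_le[OF h h])
  have s2: "nrm (h*h') \<le> \<rho>*\<rho>" by (rule nrm_mult_le[OF h h'])
  have s3: "nrm (h'^2) \<le> \<rho>*\<rho>" unfolding power2_eq_square by (rule nrm_mult_le[OF h' h'])
  have rr: "\<rho>*\<rho> \<le> \<rho>" using r0 r1 by (simp add: mult_left_le)
  have s: "nrm (h^2+h*h'+h'^2) \<le> 3*\<rho>"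
    using nrm_add[of "h^2+h*h'" "h'^2"] nrm_add[of "h^2" "h*h'"] s1 s2 s3 rr by linarith
  have B0: "nrm (b*(h^2+h*h'+h'^2)) \<le> 2*(3*\<rho>)" by (rule nrm_mult_le[OF b s])
  have B: "nrm (4*(b*(h^2+h*h'+h'^2))) \<le> 24*\<rho>" using B0 by simp
  have t: "nrm (h^2+h'^2) \<le> 2*\<rho>" using nrm_add[of "h^2" "h'^2"] s1 s3 rr by linarith
  have C0: "nrm ((h+h')*(h^2+h'^2)) \<le> (2*\<rho>)*(2*\<rho>)" by (rule nrm_mult_le[OF hh t])
  have C: "nrm ((h+h')*(h^2+h'^2)) \<le> 4*\<rho>" using C0 rr by (simp add: algebra_simps)
  have br: "nrm (6*(b^2*(h+h')) + 4*(b*(h^2+h*h'+h'^2)) + (h+h')*(h^2+h'^2)) \<le> 76*\<rho>"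
    using nrm_add[of "6*(b^2*(h+h')) + 4*(b*(h^2+h*h'+h'^2))" "(h+h')*(h^2+h'^2)"]
      nrm_add[of "6*(b^2*(h+h'))" "4*(b*(h^2+h*h'+h'^2))"] A B C by linarith
  have "nrm (qq b h - qq b h') \<le> nrm (h-h') * (76*\<rho>)"
    unfolding qq_diff by (rule nrm_mult_le[OF order_refl br])
  then show ?thesis by (simp add: algebra_simps)
qed

lemma nrm_sum: "nrm (\<Sum>i\<in>A. f i) \<le> (\<Sum>i\<in>A. nrm (f i))"
proof (induction A rule: infinite_finite_induct)
  case (insert x F)
  then show ?case using nrm_add[of "f x" "sum f F"] by simp
qed simp_all

lemma bform_y: assumes "y \<noteq> 0" "degree P \<le> e"
  shows "bform_eval e P x y = y^e * poly P (x/y)"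
proof -
  have "poly P (x/y) = (\<Sum>i\<le>e. coeff P i * (x/y)^i)"
    unfolding poly_altdef by (rule sum.mono_neutral_left) (use assms in \<open>auto simp: coeff_eq_0\<close>)
  then have "y^e * poly P (x/y) = (\<Sum>i\<le>e. coeff P i * (y^e * (x/y)^i))"
    by (simp add: sum_distrib_left algebra_simps)
  also have "\<dots> = (\<Sum>i\<le>e. coeff P i * x ^ i * y ^ (e - i))"
  proof (rule sum.cong)
    fix i assume "i \<in> {..e}"
    then have "y^e = y^i * y^(e-i)" by (simp add: power_add[symmetric])
    then show "coeff P i * (y^e * (x/y)^i) = coeff P i * x ^ i * y ^ (e - i)"
      using assms(1) by (simp add: power_divide)
  qed simp
  finally show ?thesis by (simp add: bform_eval_def)
qed

lemma bform_y0: "bform_eval e P x 0 = coeff P e * x^e"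
proof -
  have "bform_eval e P x 0 = (\<Sum>i\<le>e. if i = e then coeff P e * x^e else 0)"
    unfolding bform_eval_def by (rule sum.cong) auto
  then show ?thesis by simp
qed

lemma coeff_mult_top: assumes "degree p \<le> m" "degree q \<le> n"
  shows "coeff (p*q) (m+n) = coeff p m * coeff q n"
proof -
  have "coeff (p*q) (m+n) = (\<Sum>i\<le>m+n. if i = m then coeff p m * coeff q n else 0)"
    unfolding coeff_mult
  proof (rule sum.cong)
    fix i assume "i \<in> {..m+n}"
    show "coeff p i * coeff q (m + n - i) = (if i = m then coeff p m * coeff q n else 0)"
    proof (cases "i = m")
      case False
      then have "i > m \<or> m + n - i > n" by auto
      then show ?thesis using assms False by (auto simp: coeff_eq_0)
    qed simp
  qed simp
  then show ?thesis by simp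
qed

lemma bform_mult: assumes "degree p \<le> m" "degree q \<le> n"
  shows "bform_eval (m+n) (p*q) x y = bform_eval m p x y * bform_eval n q x y"
proof (cases "y = 0")
  case True
  then show ?thesis using coeff_mult_top[OF assms] by (simp add: bform_y0 power_add)
next
  case False
  have "degree (p*q) \<le> m + n" using degree_mult_le[of p q] assms by linarith
  then show ?thesis using False assms by (simp add: bform_y poly_mult power_add)
qed

lemma bform_sum: "bform_eval e (\<Sum>j\<in>A. f j) x y = (\<Sum>j\<in>A. bform_eval e (f j) x y)"
  unfolding bform_eval_def coeff_sum sum_distrib_right by (rule sum.swap)

lemma bform_power: assumes "degree p \<le> d"
  shows "bform_eval (n*d) (p^n) x y = (bform_eval d p x y)^n"
proof (induction n)
  case 0
  then show ?case by (simp add: bform_eval_def)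
next
  case (Suc n)
  have dn: "degree (p^n) \<le> n*d" using degree_power_le[of p n] assms
    by (metis dual_order.trans mult.commute mult_le_mono2)
  have "bform_eval (Suc n * d) (p^Suc n) x y = bform_eval (d + n*d) (p * p^n) x y" by simp
  also have "\<dots> = bform_eval d p x y * bform_eval (n*d) (p^n) x y"
    by (rule bform_mult[OF assms dn])
  finally show ?case using Suc by simp
qed


definition G0 :: "nat \<Rightarrow> real poly \<Rightarrow> real poly" where "G0 d g = poly_cutoff d g"
definition G1 :: "nat \<Rightarrow> real poly \<Rightarrow> real poly" where "G1 d g = poly_cutoff d (poly_shift d g)"
definition G2 :: "nat \<Rightarrow> real poly \<Rightarrow> real poly" where "G2 d g = poly_cutoff d (poly_shift (2*d) g)"
definition G3 :: "nat \<Rightarrow> real poly \<Rightarrow> real poly" where "G3 d g = poly_cutoff (Suc d) (poly_shift (3*d) g)"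

definition MM :: "nat \<Rightarrow> real poly \<Rightarrow> nat \<Rightarrow> real poly" where
  "MM d g i = (let A = smult (1/4) (G0 d g); B = smult (1/4) (G3 d g);
      P = smult (1/24) (G2 d g); Q = smult (1/24) (G1 d g) in
      if i = 0 then A - 2*P else if i = 1 then B - 2*Q else if i = 2 then P + Q else P - Q)"

definition sd :: "nat \<Rightarrow> real poly" where "sd d = monom 1 d"

definition bb :: "nat \<Rightarrow> nat \<Rightarrow> real poly" where
  "bb d i = (if i = 0 then 1 else if i = 1 then sd d else if i = 2 then 1 + sd d else 1 - sd d)"

definition LL :: "nat \<Rightarrow> (nat \<Rightarrow> real poly) \<Rightarrow> real poly" where
  "LL d h = (\<Sum>i<4. 4*(bb d i ^ 3 * h i))"

lemma sum4: "(\<Sum>i<4. f i) = f 0 + f 1 + f 2 + (f (3::nat) :: real poly)"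
  by (simp add: eval_nat_numeral)

lemma decomp: assumes "degree g \<le> 4*d"
  shows "g = G0 d g + sd d * G1 d g + sd d ^ 2 * G2 d g + sd d ^ 3 * G3 d g"
proof (rule poly_eqI)
  fix k
  have z: "coeff g k = 0" if "k > 4*d" using that assms by (simp add: coeff_eq_0)
  show "coeff g k = coeff (G0 d g + sd d * G1 d g + sd d ^ 2 * G2 d g + sd d ^ 3 * G3 d g) k"
    unfolding G0_def G1_def G2_def G3_def sd_def monom_power
    using z by (auto simp: coeff_monom_mult coeff_poly_cutoff coeff_poly_shift)
qed

lemma LM: assumes "degree g \<le> 4*d" shows "LL d (MM d g) = g"
proof -
  define A where "A = smult (1/4) (G0 d g)"
  define B where "B = smult (1/4) (G3 d g)"
  define P where "P = smult (1/24) (G2 d g)"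
  define Q where "Q = smult (1/24) (G1 d g)"
  have e: "G0 d g = 4*A" "G3 d g = 4*B" "G2 d g = 24*P" "G1 d g = 24*Q"
    unfolding A_def B_def P_def Q_def by (simp_all add: numeral_mult_conv_smult)
  have "LL d (MM d g) = 4*(A - 2*P) + 4*(sd d^3*(B - 2*Q)) + 4*((1+sd d)^3*(P+Q)) + 4*((1-sd d)^3*(P-Q))"
    unfolding LL_def sum4 MM_def bb_def A_def B_def P_def Q_def Let_def by simp
  also have "\<dots> = 4*A + sd d*(24*Q) + sd d^2*(24*P) + sd d^3*(4*B)"
    by (simp add: algebra_simps power2_eq_square power3_eq_cube)
  also have "\<dots> = g" using decomp[OF assms] unfolding e[symmetric] by simp
  finally show ?thesis .
qed

lemma deg_cutoff: "n \<le> Suc d \<Longrightarrow> degree (poly_cutoff n p) \<le> d"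
  by (rule degree_le) (simp add: coeff_poly_cutoff)

lemma deg_num: "degree (numeral n * (p::real poly)) \<le> degree p"
  by (simp add: numeral_mult_conv_smult degree_smult_le)

lemma MM_deg: "degree (MM d g i) \<le> d"
proof -
  have a: "degree (G0 d g) \<le> d" "degree (G1 d g) \<le> d" "degree (G2 d g) \<le> d" "degree (G3 d g) \<le> d"
    unfolding G0_def G1_def G2_def G3_def by (simp_all add: deg_cutoff)
  have b: "degree (smult c p) \<le> d" if "degree p \<le> d" for c and p :: "real poly"
    using that degree_smult_le order_trans by blast
  have c: "degree (2 * p) \<le> d" if "degree p \<le> d" for p :: "real poly"
    using that deg_num order_trans by blast
  show ?thesis unfolding MM_def Let_def
    using a by (auto intro!: degree_add_le degree_diff_le b c)
qed

lemma cutoff_diff: "poly_cutoff n (p - q) = poly_cutoff n p - poly_cutoff n q"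
  by (rule poly_eqI) (simp add: coeff_poly_cutoff)
lemma shift_diff: "poly_shift n (p - q) = poly_shift n p - poly_shift n q"
  by (rule poly_eqI) (simp add: coeff_poly_shift)

lemma MM_diff: "MM d (g - g') i = MM d g i - MM d g' i"
  unfolding MM_def Let_def G0_def G1_def G2_def G3_def cutoff_diff shift_diff
  by (simp add: smult_diff_right algebra_simps)

lemma MM_0 [simp]: "MM d 0 i = 0"
  using MM_diff[of d 0 0 i] by simp

lemma coeff_G: "\<bar>coeff (G0 d g) k\<bar> \<le> nrm g" "\<bar>coeff (G1 d g) k\<bar> \<le> nrm g"
   "\<bar>coeff (G2 d g) k\<bar> \<le> nrm g" "\<bar>coeff (G3 d g) k\<bar> \<le> nrm g"
  unfolding G0_def G1_def G2_def G3_def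
  by (simp_all add: coeff_poly_cutoff coeff_poly_shift coeff_le_nrm nrm_nonneg)

lemma MM_nrm: "nrm (MM d g i) \<le> real (Suc d) * nrm g"
proof (rule nrm_bound[OF MM_deg])
  fix k
  have a: "\<bar>coeff (G0 d g) k\<bar> \<le> nrm g" "\<bar>coeff (G1 d g) k\<bar> \<le> nrm g"
   "\<bar>coeff (G2 d g) k\<bar> \<le> nrm g" "\<bar>coeff (G3 d g) k\<bar> \<le> nrm g" by (rule coeff_G)+
  show "\<bar>coeff (MM d g i) k\<bar> \<le> nrm g"
    unfolding MM_def Let_def using a
    by (auto simp: numeral_mult_conv_smult abs_le_iff)
qed

lemma deg_sd: "degree (sd d) \<le> d" unfolding sd_def by (rule degree_monom_le)
lemma nrm_sd: "nrm (sd d) = 1" by (simp add: sd_def)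

lemma bb_deg: "degree (bb d i) \<le> d"
  unfolding bb_def using deg_sd by (auto intro!: degree_add_le degree_diff_le)

lemma bb_nrm: "nrm (bb d i) \<le> 2"
  unfolding bb_def using nrm_add[of 1 "sd d"] nrm_diff[of 1 "sd d"] by (auto simp: nrm_sd)


definition QQ :: "nat \<Rightarrow> (nat \<Rightarrow> real poly) \<Rightarrow> real poly" where
  "QQ d h = (\<Sum>i<4. qq (bb d i) (h i))"

definition FF :: "nat \<Rightarrow> real poly" where "FF d = (\<Sum>i<4. bb d i ^ 4)"

definition SS :: "nat \<Rightarrow> real poly \<Rightarrow> real poly \<Rightarrow> real poly" where
  "SS d G w = G - FF d - QQ d (MM d w)"

lemma Phi_expand: "(\<Sum>i<4. (bb d i + h i)^4) = FF d + LL d h + QQ d h"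
  unfolding FF_def LL_def QQ_def expand by (simp add: sum.distrib)

lemma deg_mult': "degree p \<le> m \<Longrightarrow> degree q \<le> n \<Longrightarrow> degree (p*q) \<le> m+n"
  using degree_mult_le[of p q] by linarith

lemma deg_pow': "degree p \<le> m \<Longrightarrow> degree (p^k) \<le> k*m"
  using degree_power_le[of p k] by (metis dual_order.trans mult.commute mult_le_mono2)

lemma qq_deg: assumes "degree b \<le> d" "degree h \<le> d" shows "degree (qq b h) \<le> 4*d"
proof -
  have 1: "degree (b^2*h^2) \<le> 4*d"
    using deg_mult'[OF deg_pow'[OF assms(1), of 2] deg_pow'[OF assms(2), of 2]] by simp
  have 2: "degree (b*h^3) \<le> 4*d"
    using deg_mult'[OF assms(1) deg_pow'[OF assms(2), of 3]] by simp
  have 3: "degree (h^4) \<le> 4*d" using deg_pow'[OF assms(2), of 4] by simp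
  show ?thesis unfolding qq_def
    by (intro degree_add_le order_trans[OF deg_num] 1 2 3)
qed

lemma FF_deg: "degree (FF d) \<le> 4*d"
  unfolding FF_def by (rule degree_sum_le) (auto intro: deg_pow'[OF bb_deg])

lemma QQ_deg: "degree (QQ d (MM d w)) \<le> 4*d"
  unfolding QQ_def by (rule degree_sum_le) (auto intro: qq_deg bb_deg MM_deg)

lemma SS_deg: "degree G \<le> 4*d \<Longrightarrow> degree (SS d G w) \<le> 4*d"
  unfolding SS_def by (intro degree_diff_le FF_deg QQ_deg)

lemma SS_contr:
  assumes w: "nrm w \<le> r" and w': "nrm w' \<le> r" and r0: "0 \<le> r" and Kr: "real (Suc d) * r \<le> 1"
  shows "nrm (SS d G w - SS d G w') \<le> 304 * real (Suc d)^2 * r * nrm (w - w')"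
proof -
  let ?K = "real (Suc d)"
  have "SS d G w - SS d G w' = (\<Sum>i<4. qq (bb d i) (MM d w' i) - qq (bb d i) (MM d w i))"
    unfolding SS_def QQ_def by (simp add: sum_subtractf)
  then have "nrm (SS d G w - SS d G w') \<le> (\<Sum>i<4::nat. nrm (qq (bb d i) (MM d w' i) - qq (bb d i) (MM d w i)))"
    using nrm_sum by simp
  also have "\<dots> \<le> (\<Sum>i<4::nat. 76 * (?K*r) * (?K * nrm (w - w')))"
  proof (rule sum_mono)
    fix i :: nat
    have m1: "nrm (MM d w' i) \<le> ?K*r" using MM_nrm[of d w' i] w' by (meson mult_left_mono of_nat_0_le_iff order_trans)
    have m2: "nrm (MM d w i) \<le> ?K*r" using MM_nrm[of d w i] w by (meson mult_left_mono of_nat_0_le_iff order_trans)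
    have "nrm (qq (bb d i) (MM d w' i) - qq (bb d i) (MM d w i)) \<le> 76*(?K*r)*nrm (MM d w' i - MM d w i)"
      by (rule qq_lip[OF bb_nrm m1 m2]) (use r0 Kr in auto)
    also have "nrm (MM d w' i - MM d w i) = nrm (MM d (w - w') i)"
    proof -
      have "MM d w' i - MM d w i = - MM d (w - w') i" using MM_diff[of d w w' i] by simp
      then show ?thesis by simp
    qed
    also have "\<dots> \<le> ?K * nrm (w - w')" by (rule MM_nrm)
    finally show "nrm (qq (bb d i) (MM d w' i) - qq (bb d i) (MM d w i)) \<le> 76 * (?K*r) * (?K * nrm (w - w'))"
      using r0 by (simp add: mult_left_mono)
  qed
  also have "\<dots> = 304 * ?K^2 * r * nrm (w - w')" by (simp add: power2_eq_square algebra_simps)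
  finally show ?thesis .
qed


lemma fixpt:
  fixes d :: nat and G :: "real poly"
  defines "r \<equiv> 1 / (608 * real (Suc d)^2)"
  assumes dG: "degree G \<le> 4*d" and close: "nrm (G - FF d) \<le> r/2"
  shows "\<exists>W. degree W \<le> 4*d \<and> SS d G W = W"
proof -
  let ?K = "real (Suc d)"
  have K1: "1 \<le> ?K" by simp
  have r0: "0 < r" unfolding r_def by simp
  have aux: "(K::real) > 0 \<Longrightarrow> K * (1/(608*K^2)) = 1/(608*K)" for K by (simp add: power2_eq_square field_simps)
  have Kr0: "?K * r = 1/(608*?K)" unfolding r_def by (rule aux) simp
  have "1 \<le> 608 * ?K" using K1 by simp
  then have Kr: "?K * r \<le> 1" unfolding Kr0 by simp
  have c: "304 * ?K^2 * r = 1/2" unfolding r_def by (simp add: field_simps)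
  have contr: "nrm (SS d G w - SS d G w') \<le> 1/2 * nrm (w - w')" if "nrm w \<le> r" "nrm w' \<le> r" for w w'
    using SS_contr[OF that less_imp_le[OF r0] Kr, of G] unfolding c .
  have S0: "SS d G 0 = G - FF d" by (simp add: SS_def QQ_def)
  have ball: "nrm (SS d G w) \<le> r" if "nrm w \<le> r" for w
  proof -
    have "nrm (SS d G w) \<le> nrm (SS d G w - SS d G 0) + nrm (SS d G 0)"
      using nrm_add[of "SS d G w - SS d G 0" "SS d G 0"] by simp
    also have "\<dots> \<le> 1/2 * nrm w + r/2"
      using contr[OF that, of 0] r0 close S0 by simp
    finally show ?thesis using that by simp
  qed
  define w where "w n = (SS d G ^^ n) 0" for n
  have wS: "w (Suc n) = SS d G (w n)" for n by (simp add: w_def)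
  have w0: "w 0 = 0" by (simp add: w_def)
  have wb: "nrm (w n) \<le> r" for n
    by (induction n) (use r0 in \<open>simp_all add: w0 wS ball\<close>)
  have wd: "degree (w n) \<le> 4*d" for n
    by (cases n) (simp_all add: w0 wS SS_deg[OF dG])
  have wdiff: "nrm (w (Suc n) - w n) \<le> (1/2)^n * r" for n
  proof (induction n)
    case 0
    then show ?case using wb[of 1] by (simp add: w0)
  next
    case (Suc n)
    have "nrm (w (Suc (Suc n)) - w (Suc n)) \<le> 1/2 * nrm (w (Suc n) - w n)"
      using contr[OF wb[of "Suc n"] wb[of n]] by (simp only: wS)
    also have "\<dots> \<le> 1/2 * ((1/2)^n * r)" using Suc by simp
    finally show ?case by simp
  qed
  define a where "a k n = coeff (w (Suc n)) k - coeff (w n) k" for k n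
  have asum: "summable (a k)" for k
  proof (rule summable_comparison_test')
    show "summable (\<lambda>n. (1/2::real)^n * r)" by (intro summable_mult2 summable_geometric) simp
    fix n :: nat
    have "norm (a k n) = \<bar>coeff (w (Suc n) - w n) k\<bar>" by (simp add: a_def)
    also have "\<dots> \<le> nrm (w (Suc n) - w n)" by (rule coeff_le_nrm)
    also have "\<dots> \<le> (1/2)^n * r" by (rule wdiff)
    finally show "norm (a k n) \<le> (1/2)^n * r" .
  qed
  define c where "c k = suminf (a k)" for k
  have wlim: "(\<lambda>n. coeff (w n) k) \<longlonglongrightarrow> c k" for k
  proof -
    have "(\<lambda>n. \<Sum>i<n. a k i) \<longlonglongrightarrow> c k" unfolding c_def by (rule summable_LIMSEQ[OF asum])
    moreover have "(\<Sum>i<n. a k i) = coeff (w n) k" for n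
      unfolding a_def using sum_lessThan_telescope[of "\<lambda>m. coeff (w m) k" n] by (simp add: w0)
    ultimately show ?thesis by simp
  qed
  define W where "W = (\<Sum>k\<le>4*d. monom (c k) k)"
  have cW: "coeff W k = (if k \<le> 4*d then c k else 0)" for k
    unfolding W_def coeff_sum coeff_monom by simp
  have Wd: "degree W \<le> 4*d" by (rule degree_le) (simp add: cW)
  have wlim2: "(\<lambda>n. coeff (w n) k) \<longlonglongrightarrow> coeff W k" for k
  proof (cases "k \<le> 4*d")
    case True
    then show ?thesis using wlim[of k] by (simp add: cW)
  next
    case False
    then have "coeff (w n) k = 0" for n using wd[of n] by (simp add: coeff_eq_0)
    then show ?thesis using False by (simp add: cW)
  qed
  have nlim: "(\<lambda>n. nrm (w n - W)) \<longlonglongrightarrow> 0"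
  proof -
    have e: "nrm (w n - W) = (\<Sum>k\<le>4*d. \<bar>coeff (w n) k - coeff W k\<bar>)" for n
      by (subst nrm_eq[of _ "4*d"]) (simp_all add: degree_diff_le wd Wd)
    have "(\<lambda>n. \<Sum>k\<le>4*d. \<bar>coeff (w n) k - coeff W k\<bar>) \<longlonglongrightarrow> (\<Sum>k\<le>4*d. 0)"
      by (intro tendsto_sum tendsto_rabs_zero LIM_zero wlim2)
    then show ?thesis unfolding e by simp
  qed
  have Wr: "nrm W \<le> r"
  proof -
    have "nrm W - r \<le> nrm (w n - W)" for n
    proof -
      have "nrm W \<le> nrm (W - w n) + nrm (w n)" using nrm_add[of "W - w n" "w n"] by simp
      also have "nrm (W - w n) = nrm (w n - W)" using nrm_uminus[of "w n - W"] by simp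
      finally show ?thesis using wb[of n] by simp
    qed
    then have "nrm W - r \<le> 0" by (intro LIMSEQ_le_const[OF nlim]) auto
    then show ?thesis by simp
  qed
  have fxW: "SS d G W = W"
  proof -
    have b: "nrm (SS d G W - W) \<le> 1/2 * nrm (w n - W) + nrm (w (Suc n) - W)" for n
    proof -
      have "SS d G W - W = (SS d G W - SS d G (w n)) + (w (Suc n) - W)" by (simp add: wS)
      then have "nrm (SS d G W - W) \<le> nrm (SS d G W - SS d G (w n)) + nrm (w (Suc n) - W)"
        using nrm_add by metis
      also have "nrm (SS d G W - SS d G (w n)) \<le> 1/2 * nrm (W - w n)" by (rule contr[OF Wr wb])
      also have "nrm (W - w n) = nrm (w n - W)" using nrm_uminus[of "w n - W"] by simp
      finally show ?thesis by simp
    qed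
    have "(\<lambda>n. 1/2 * nrm (w n - W) + nrm (w (Suc n) - W)) \<longlonglongrightarrow> 1/2 * 0 + 0"
      by (intro tendsto_intros nlim LIMSEQ_Suc[OF nlim])
    then have "nrm (SS d G W - W) \<le> 1/2 * 0 + 0" by (rule LIMSEQ_le_const) (use b in auto)
    then have "SS d G W - W = 0" by (intro nrm_zero) simp
    then show ?thesis by simp
  qed
  show ?thesis using Wd fxW by blast
qed

theorem mainTheorem8:
  fixes d :: nat
  assumes "d \<ge> 1"
  shows "has_nonempty_interior_forms (4 * d) (four_length_le4 d)"
proof -
  define r where "r = 1 / (608 * real (Suc d)^2)"
  define \<epsilon> where "\<epsilon> = (r/2) / real (Suc (4*d))"
  have r0: "0 < r" unfolding r_def by simp
  have e0: "0 < \<epsilon>" unfolding \<epsilon>_def using r0 by simp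
  show ?thesis unfolding has_nonempty_interior_forms_def
  proof (intro exI conjI allI impI)
    show "is_bform (4*d) (FF d)" unfolding is_bform_def by (rule FF_deg)
    show "0 < \<epsilon>" by (rule e0)
    fix G assume G: "is_bform (4 * d) G \<and> (\<forall>i\<le>4 * d. \<bar>coeff G i - coeff (FF d) i\<bar> < \<epsilon>)"
    then have dG: "degree G \<le> 4*d" by (simp add: is_bform_def)
    have "nrm (G - FF d) \<le> real (Suc (4*d)) * \<epsilon>"
      by (rule nrm_bound) (use G in \<open>auto intro: degree_diff_le FF_deg simp: is_bform_def less_imp_le\<close>)
    moreover have "real (Suc (4*d)) * \<epsilon> = r/2" unfolding \<epsilon>_def by (simp del: of_nat_Suc)
    ultimately have cl: "nrm (G - FF d) \<le> r/2" by simp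
    obtain W where Wd: "degree W \<le> 4*d" and fx: "SS d G W = W"
      using fixpt[OF dG cl[unfolded r_def]] by blast
    define p where "p i = bb d i + MM d W i" for i
    have pd: "is_bform d (p i)" for i unfolding is_bform_def p_def
      by (intro degree_add_le bb_deg MM_deg)
    have sumG: "(\<Sum>i<4. p i ^ 4) = G"
    proof -
      have "(\<Sum>i<4. p i ^ 4) = FF d + LL d (MM d W) + QQ d (MM d W)"
        unfolding p_def by (rule Phi_expand)
      also have "\<dots> = FF d + W + QQ d (MM d W)" using LM[OF Wd] by simp
      also have "\<dots> = G" using fx unfolding SS_def by (simp add: algebra_simps)
      finally show ?thesis .
    qed
    have "bform_eval (4 * d) G x y = (\<Sum>i<4. (bform_eval d (p i) x y) ^ 4)" for x y
    proof -
      have "bform_eval (4 * d) G x y = (\<Sum>i<4. bform_eval (4*d) (p i ^ 4) x y)"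
        unfolding sumG[symmetric] by (rule bform_sum)
      also have "\<dots> = (\<Sum>i<4. (bform_eval d (p i) x y) ^ 4)"
        by (rule sum.cong) (use pd in \<open>simp_all add: is_bform_def bform_power\<close>)
      finally show ?thesis .
    qed
    then show "G \<in> four_length_le4 d" unfolding four_length_le4_def
      using G pd by blast
  qed
qed

end
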